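(* In the setting described in the context, assume that $D^pf(x)=\mathcal{C}_*$ for all $x\in\mathbb{R}^n$ (for a fixed $\mathcal{C}_*\in\mathbb{R}^{\otimes^p n}_{\mathrm{sym}}$) and that $W_k=W_*$ for all $k$, for a fixed nonsingular $W_*\in\mathbb{R}^{n\times n}$. If the vectors $W_*^{-1}s_0,\dots,W_*^{-1}s_{n-1}$ are pairwise orthogonal, then $\mathcal{C}_n=\mathcal{C}_*$.
   Context: Setting (higher-order secant update): $p\ge 2$; $f:\mathbb{R}^n\to\mathbb{R}$ is $p$ times continuously differentiable, $D^pf(x)\in\mathbb{R}^{\otimes^p n}_{\mathrm{sym}}$ denoting its $p$th derivative viewed as a symmetric multilinear map; $(x_k)_{k\ge0}$ is a sequence in $\mathbb{R}^n$ with steps $s_k = x_{k+1}-x_k \ne 0$; $(W_k)_{k\ge0}$ are nonsingular $n\times n$ matrices; $\widetilde{\mathcal{C}}_k = \int_0^1 D^pf(x_k+ts_k)\,dt$; $\mathcal{C}_0\in\mathbb{R}^{\otimes^p n}_{\mathrm{sym}}$ is arbitrary and $\mathcal{C}_{k+1}$ is the unique minimizer of $\|(\mathcal{C}-\mathcal{C}_k)[W_k]^p\|_F$ over $\mathcal{C}\in\mathbb{R}^{\otimes^p n}_{\mathrm{sym}}$ subject to $\mathcal{C}[s_k]=\widetilde{\mathcal{C}}_k[s_k]$. Notation: a $p$-tensor is a multilinear map $(\mathbb{R}^n)^p\to\mathbb{R}$; $\mathcal{T}[s]$ fixes the first argument to $s$; $(\mathcal{T}[M]^p)[s_1,\dots,s_p]=\mathcal{T}[Ms_1,\dots,Ms_p]$;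 symmetric means invariant under permutation of arguments; $\|\cdot\|_F$ is the Frobenius norm of the array of entries $\mathcal{T}[e_{i_1},\dots,e_{i_p}]$. *)

theory Defs
  imports "HOL-Analysis.Analysis"
begin

text \<open>A p-tensor on R^n (n = CARD('n)) is represented by its array of entries
  T[e_i1,...,e_ip], i.e. a function on index lists; entries at lists of
  length different from p are required to be 0 (see tensor_space).\<close>

type_synonym 'n tensor = "'n list \<Rightarrow> real"

definition tensor_space :: "nat \<Rightarrow> 'n tensor set" where
  "tensor_space p = {T. \<forall>is. length is \<noteq> p \<longrightarrow> T is = 0}"

definition sym_tensor :: "nat \<Rightarrow> ('n::finite) tensor \<Rightarrow> bool" where
  "sym_tensor p T \<longleftrightarrow> T \<in> tensor_space p \<and>
     (\<forall>is js. length is = p \<longrightarrow> mset is = mset js \<longrightarrow> T is = T js)"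

definition tensor_apply :: "('n::finite) tensor \<Rightarrow> real^'n \<Rightarrow> 'n tensor" where
  "tensor_apply T s = (\<lambda>is. \<Sum>i\<in>UNIV. s $ i * T (i # is))"

text \<open>T[M]^p: (T[M]^p)[e_j1,...,e_jp] = T[M e_j1,...,M e_jp].\<close>
definition tensor_transform :: "nat \<Rightarrow> ('n::finite) tensor \<Rightarrow> real^'n^'n \<Rightarrow> 'n tensor" where
  "tensor_transform p T M = (\<lambda>js. if length js = p then
      (\<Sum>is\<in>{is. length is = p}. T is * (\<Prod>l<p. M $ (is ! l) $ (js ! l)))
    else 0)"

definition frob :: "nat \<Rightarrow> ('n::finite) tensor \<Rightarrow> real" where
  "frob p T = sqrt (\<Sum>is\<in>{is. length is = p}. (T is)\<^sup>2)"

fun nderiv :: "nat \<Rightarrow> (real^'n \<Rightarrow> real) \<Rightarrow> real^'n \<Rightarrow> (real^'n) list \<Rightarrow> real" where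
  "nderiv 0 f x vs = f x"
| "nderiv (Suc m) f x vs =
     frechet_derivative (\<lambda>y. nderiv m f y (tl vs)) (at x) (hd vs)"

definition Cp :: "nat \<Rightarrow> (real^'n \<Rightarrow> real) \<Rightarrow> bool" where
  "Cp p f \<longleftrightarrow> (\<forall>m<p. \<forall>vs x. (\<lambda>y. nderiv m f y vs) differentiable (at x))
     \<and> (\<forall>vs. continuous_on UNIV (\<lambda>y. nderiv p f y vs))"

definition Dp :: "nat \<Rightarrow> (real^'n \<Rightarrow> real) \<Rightarrow> real^'n \<Rightarrow> ('n::finite) tensor" where
  "Dp p f x = (\<lambda>is. if length is = p then nderiv p f x (map (\<lambda>i. axis i 1) is) else 0)"

definition Ctilde :: "nat \<Rightarrow> (real^'n \<Rightarrow> real) \<Rightarrow> real^'n \<Rightarrow> real^'n \<Rightarrow> ('n::finite) tensor" where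
  "Ctilde p f xk sk = (\<lambda>is. integral {0..1} (\<lambda>t. Dp p f (xk + t *\<^sub>R sk) is))"

end

theory Submission imports Defs begin

lemma finite_len: "finite {is::('n::finite) list. length is = p}"
  using finite_lists_length_eq[of "UNIV::'n set" p] by simp

lemma sum_len_Suc:
  "(\<Sum>is\<in>{is::('n::finite) list. length is = Suc p}. g is) = (\<Sum>i\<in>UNIV. \<Sum>is\<in>{is. length is = p}. g (i # is))"
proof -
  have "{is::'n list. length is = Suc p} = (\<lambda>(i,is). i # is) ` (UNIV \<times> {is. length is = p})"
    by (auto simp: length_Suc_conv image_iff)
  moreover have "inj_on (\<lambda>(i::'n,is). i # is) (UNIV \<times> {is. length is = p})"
    by (auto simp: inj_on_def)
  ultimately show ?thesis
    by (simp add: sum.reindex sum.cartesian_product split_def)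
qed

lemma tt_off: "length js \<noteq> p \<Longrightarrow> tensor_transform p T M js = 0"
  by (simp add: tensor_transform_def)

lemma tt_Nil: "tensor_transform 0 T M [] = T []"
  by (simp add: tensor_transform_def)

lemma tt_Cons:
  "tensor_transform (Suc p) T M (j # js) = (\<Sum>i\<in>UNIV. M $ i $ j * tensor_transform p (\<lambda>is. T (i # is)) M js)"
proof (cases "length js = p")
  case True
  have "tensor_transform (Suc p) T M (j # js)
     = (\<Sum>i\<in>UNIV. \<Sum>is\<in>{is. length is = p}. T (i#is) * (\<Prod>l<Suc p. M $ ((i#is) ! l) $ ((j#js) ! l)))"
    using True by (simp add: tensor_transform_def sum_len_Suc)
  also have "\<dots> = (\<Sum>i\<in>UNIV. \<Sum>is\<in>{is. length is = p}. M $ i $ j * (T (i#is) * (\<Prod>l<p. M $ (is ! l) $ (js ! l))))"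
    by (simp only: prod.lessThan_Suc_shift nth_Cons_0 nth_Cons_Suc) (simp add: algebra_simps)
  also have "\<dots> = (\<Sum>i\<in>UNIV. M $ i $ j * tensor_transform p (\<lambda>is. T (i # is)) M js)"
    using True by (simp add: tensor_transform_def sum_distrib_left)
  finally show ?thesis .
qed (simp add: tensor_transform_def)

lemma tt_lin:
  fixes X :: "'k \<Rightarrow> ('n::finite) tensor"
  shows "tensor_transform p (\<lambda>is. \<Sum>k\<in>K. c k * X k is) M js = (\<Sum>k\<in>K. c k * tensor_transform p (X k) M js)"
proof (cases "length js = p")
  case True
  have "(\<Sum>is\<in>{is. length is = p}. (\<Sum>k\<in>K. c k * X k is) * (\<Prod>l<p. M $ (is ! l) $ (js ! l)))
     = (\<Sum>is\<in>{is. length is = p}. \<Sum>k\<in>K. c k * (X k is * (\<Prod>l<p. M $ (is ! l) $ (js ! l))))"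
    by (simp add: sum_distrib_right mult.assoc)
  also have "\<dots> = (\<Sum>k\<in>K. \<Sum>is\<in>{is. length is = p}. c k * (X k is * (\<Prod>l<p. M $ (is ! l) $ (js ! l))))"
    by (rule sum.swap)
  also have "\<dots> = (\<Sum>k\<in>K. c k * (\<Sum>is\<in>{is. length is = p}. X k is * (\<Prod>l<p. M $ (is ! l) $ (js ! l))))"
    by (simp add: sum_distrib_left)
  finally show ?thesis using True by (simp add: tensor_transform_def)
qed (simp add: tensor_transform_def)

lemma swap_helper: "(\<Sum>i\<in>UNIV. b i * (\<Sum>k\<in>UNIV. a k i * z k)) = (\<Sum>k\<in>UNIV. (\<Sum>i\<in>UNIV. a k i * b i) * (z k::real))"
proof -
  have "(\<Sum>i\<in>UNIV. b i * (\<Sum>k\<in>UNIV. a k i * z k)) = (\<Sum>i\<in>UNIV. \<Sum>k\<in>UNIV. a k i * b i * z k)"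
    by (simp add: sum_distrib_left mult_ac)
  also have "\<dots> = (\<Sum>k\<in>UNIV. \<Sum>i\<in>UNIV. a k i * b i * z k)" by (rule sum.swap)
  also have "\<dots> = (\<Sum>k\<in>UNIV. (\<Sum>i\<in>UNIV. a k i * b i) * (z k::real))" by (simp add: sum_distrib_right)
  finally show ?thesis .
qed

lemma tt_diff: "tensor_transform p (\<lambda>is. X is - Y is) M js = tensor_transform p X M js - tensor_transform p Y M js"
  by (simp add: tensor_transform_def sum_subtractf left_diff_distrib)

lemma tt_add: "tensor_transform p (\<lambda>is. X is + Y is) M js = tensor_transform p X M js + tensor_transform p Y M js"
  by (simp add: tensor_transform_def sum.distrib distrib_right)

lemma tt_comp:
  "tensor_transform p (tensor_transform p T A) B js = tensor_transform p T (A ** B) js"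
proof (induction p arbitrary: T js)
  case 0
  then show ?case by (cases js) (simp_all add: tt_Nil tt_off)
next
  case (Suc p)
  show ?case
  proof (cases js)
    case Nil then show ?thesis by (simp add: tt_off)
  next
    case (Cons j js')
    have "tensor_transform (Suc p) (tensor_transform (Suc p) T A) B js
      = (\<Sum>i\<in>UNIV. B $ i $ j * tensor_transform p (\<lambda>is. \<Sum>k\<in>UNIV. A $ k $ i * tensor_transform p (\<lambda>is. T (k # is)) A is) B js')"
      by (simp add: Cons tt_Cons)
    also have "\<dots> = (\<Sum>i\<in>UNIV. B $ i $ j * (\<Sum>k\<in>UNIV. A $ k $ i * tensor_transform p (\<lambda>is. T (k # is)) (A ** B) js'))"
      by (intro sum.cong refl arg_cong[where f="\<lambda>x. _ * x"], rule trans[OF tt_lin], simp only: Suc.IH)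
    also have "\<dots> = (\<Sum>k\<in>UNIV. (A ** B) $ k $ j * tensor_transform p (\<lambda>is. T (k # is)) (A ** B) js')"
      unfolding matrix_matrix_mult_def by (simp only: vec_lambda_beta swap_helper)
    finally show ?thesis by (simp add: Cons tt_Cons)
  qed
qed

lemma delta_sum: "(\<Sum>i\<in>(UNIV::'n::finite set). (if i = j then 1 else 0) * X i) = (X j::real)"
proof -
  have "(\<Sum>i\<in>(UNIV::'n set). (if i = j then 1 else 0) * X i) = (\<Sum>i\<in>UNIV. if i = j then X i else 0)"
    by (rule sum.cong) auto
  then show ?thesis by simp
qed

lemma tt_id: "length js = p \<Longrightarrow> tensor_transform p T (mat 1) js = T js"
proof (induction p arbitrary: T js)
  case 0 then show ?case by (simp add: tt_Nil)
next
  case (Suc p)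
  then obtain j js' where js: "js = j # js'" "length js' = p" by (cases js) auto
  have "tensor_transform (Suc p) T (mat 1) js = (\<Sum>i\<in>UNIV. (if i = j then 1 else 0) * T (i # js'))"
    using Suc.IH[OF js(2)] by (simp add: js tt_Cons mat_def)
  then show ?case by (simp add: delta_sum js)
qed


definition ip :: "nat \<Rightarrow> ('n::finite) tensor \<Rightarrow> 'n tensor \<Rightarrow> real" where
  "ip p A B = (\<Sum>is\<in>{is. length is = p}. A is * B is)"

lemma tt_adj: "ip p G (tensor_transform p T M) = ip p (tensor_transform p G (transpose M)) T"
proof -
  have "ip p G (tensor_transform p T M) = (\<Sum>js\<in>{js. length js = p}. \<Sum>is\<in>{is. length is = p}. G js * (\<Prod>l<p. M $ (is ! l) $ (js ! l)) * T is)"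
    by (simp add: ip_def tensor_transform_def sum_distrib_left mult_ac)
  also have "\<dots> = (\<Sum>is\<in>{is. length is = p}. \<Sum>js\<in>{js. length js = p}. G js * (\<Prod>l<p. M $ (is ! l) $ (js ! l)) * T is)"
    by (rule sum.swap)
  also have "\<dots> = ip p (tensor_transform p G (transpose M)) T"
    by (simp add: ip_def tensor_transform_def sum_distrib_right transpose_def)
  finally show ?thesis .
qed

lemma ta_tt: "tensor_apply (tensor_transform (Suc q) T M) u = tensor_transform q (tensor_apply T (M *v u)) M"
proof
  fix ks
  have "tensor_apply (tensor_transform (Suc q) T M) u ks = (\<Sum>j\<in>UNIV. u $ j * (\<Sum>i\<in>UNIV. M $ i $ j * tensor_transform q (\<lambda>is. T (i # is)) M ks))"
    by (simp add: tensor_apply_def tt_Cons)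
  also have "\<dots> = (\<Sum>i\<in>UNIV. (\<Sum>j\<in>UNIV. M $ i $ j * u $ j) * tensor_transform q (\<lambda>is. T (i # is)) M ks)"
    by (rule swap_helper)
  also have "\<dots> = tensor_transform q (\<lambda>is. \<Sum>i\<in>UNIV. (M *v u) $ i * T (i # is)) M ks"
    by (rule sym, rule trans[OF tt_lin], simp add: matrix_vector_mult_def)
  finally show "tensor_apply (tensor_transform (Suc q) T M) u ks = tensor_transform q (tensor_apply T (M *v u)) M ks"
    by (simp add: tensor_apply_def)
qed

definition projm :: "real^'n \<Rightarrow> real^'n^'n" where
  "projm u = (\<chi> i j. (if i = j then 1 else 0) - u$i * u$j / (u \<bullet> u))"

lemma projm_transpose: "transpose (projm u) = projm u"
  by (simp add: projm_def transpose_def vec_eq_iff mult.commute)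

lemma projm_vec: "projm u *v x = x - ((u \<bullet> x) / (u \<bullet> u)) *\<^sub>R u"
proof -
  have "\<And>i. (\<Sum>j\<in>UNIV. ((if i = j then 1 else 0) - u$i * u$j / (u \<bullet> u)) * x $ j)
      = x $ i - (u \<bullet> x) / (u \<bullet> u) * u $ i"
  proof -
    fix i
    have "(\<Sum>j\<in>UNIV. ((if i = j then 1 else 0) - u$i * u$j / (u \<bullet> u)) * x $ j)
      = (\<Sum>j\<in>UNIV. (if j = i then 1 else 0) * x $ j - u$i / (u \<bullet> u) * (u$j * x $ j))"
      by (rule sum.cong) (auto simp: field_simps)
    also have "\<dots> = (\<Sum>j\<in>UNIV. (if j = i then 1 else 0) * x $ j) - (\<Sum>j\<in>UNIV. u$i / (u \<bullet> u) * (u$j * x $ j))"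
      by (rule sum_subtractf)
    also have "\<dots> = x $ i - (u \<bullet> x) / (u \<bullet> u) * u $ i"
      by (simp only: delta_sum sum_distrib_left[symmetric] inner_vec_def) simp
    finally show "?thesis i" .
  qed
  then show ?thesis by (simp add: projm_def matrix_vector_mult_def vec_eq_iff)
qed

lemma projm_u: "u \<noteq> 0 \<Longrightarrow> projm u *v u = 0"
  by (simp add: projm_vec)

lemma projm_idem: "u \<noteq> 0 \<Longrightarrow> projm u ** projm u = projm u"
  unfolding matrix_eq
  by (simp add: matrix_vector_mul_assoc[symmetric] projm_vec inner_diff_right field_simps)

definition Zprop :: "nat \<Rightarrow> ('n::finite) tensor \<Rightarrow> real^'n \<Rightarrow> bool" where
  "Zprop p T u \<longleftrightarrow> (\<forall>as bs. length as + length bs + 1 = p \<longrightarrow> (\<Sum>i\<in>UNIV. u$i * T (as @ i # bs)) = 0)"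

lemma proj_fix: "Zprop p T u \<Longrightarrow> length js = p \<Longrightarrow> tensor_transform p T (projm u) js = T js"
proof (induction p arbitrary: T js)
  case 0 then show ?case by (simp add: tt_Nil)
next
  case (Suc p)
  then obtain j js' where js: "js = j # js'" "length js' = p" by (cases js) auto
  have Z: "Zprop p (\<lambda>is. T (i # is)) u" for i
    unfolding Zprop_def
  proof (intro allI impI)
    fix as bs :: "'a list" assume "length as + length bs + 1 = p"
    then show "(\<Sum>k\<in>UNIV. u$k * T (i # as @ k # bs)) = 0"
      using Suc.prems(1)[unfolded Zprop_def, rule_format, of "i # as" bs] by simp
  qed
  have Z0: "(\<Sum>i\<in>UNIV. u$i * T (i # js')) = 0"
    using Suc.prems(1) js(2) unfolding Zprop_def by (auto dest: spec[of _ "[]"])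
  have "tensor_transform (Suc p) T (projm u) js = (\<Sum>i\<in>UNIV. projm u $ i $ j * T (i # js'))"
    using Suc.IH[OF Z js(2)] by (simp add: js tt_Cons)
  also have "\<dots> = (\<Sum>i\<in>UNIV. (if i = j then 1 else 0) * T (i # js')) - u $ j / (u \<bullet> u) * (\<Sum>i\<in>UNIV. u$i * T (i # js'))"
  proof -
    have "(\<Sum>i\<in>UNIV. projm u $ i $ j * T (i # js')) = (\<Sum>i\<in>UNIV. (if i = j then 1 else 0) * T (i # js') - u $ j / (u \<bullet> u) * (u$i * T (i # js')))"
      by (rule sum.cong) (auto simp: projm_def field_simps)
    then show ?thesis by (simp only: sum_subtractf sum_distrib_left)
  qed
  also have "\<dots> = T js" using Z0 by (simp add: delta_sum js)
  finally show ?case .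
qed

lemma sym_Zprop: fixes T :: "('n::finite) tensor" shows "sym_tensor p T \<Longrightarrow> (\<And>is. tensor_apply T u is = 0) \<Longrightarrow> Zprop p T u"
  unfolding Zprop_def
proof (intro allI impI)
  fix as bs :: "'n list" assume S: "sym_tensor p T" and A: "\<And>is. tensor_apply T u is = 0"
    and L: "length (as::'n list) + length bs + 1 = p"
  have "\<And>i::'n. T (as @ i # bs) = T (i # (as @ bs))"
  proof -
    fix i :: 'n
    have l: "length (as @ i # bs) = p" using L by simp
    have m: "mset (as @ i # bs) = mset (i # (as @ bs))" by simp
    show "T (as @ i # bs) = T (i # (as @ bs))"
      using S[unfolded sym_tensor_def] l m by blast
  qed
  then show "(\<Sum>i\<in>UNIV. u$i * T (as @ i # bs)) = 0"
    using A[of "as @ bs"] by (simp add: tensor_apply_def)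
qed

lemma sym_tt: fixes T :: "('n::finite) tensor" assumes S: "sym_tensor p T" shows "sym_tensor p (tensor_transform p T M)"
  unfolding sym_tensor_def tensor_space_def
proof (intro conjI allI impI CollectI)
  fix ks :: "'n list" assume "length ks \<noteq> p" then show "tensor_transform p T M ks = 0" by (rule tt_off)
next
  fix js js' :: "'n list" assume L: "length js = p" and E: "mset js = mset js'"
  obtain \<sigma> where \<sigma>: "\<sigma> permutes {..<length js'}" "permute_list \<sigma> js' = js"
    using mset_eq_permutation[OF E] by metis
  have L': "length js' = p" using L E by (metis mset_eq_length)
  have \<sigma>p: "\<sigma> permutes {..<p}" using \<sigma>(1) L' by simp
  have bijl: "bij_betw (permute_list \<sigma>) {is::'n list. length is = p} {is. length is = p}"
  proof (rule bij_betw_byWitness[where f'="permute_list (inv \<sigma>)"])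
    show "\<forall>a\<in>{is::'n list. length is = p}. permute_list (inv \<sigma>) (permute_list \<sigma> a) = a"
      using \<sigma>p permutes_inv[OF \<sigma>p] permutes_inv_o[OF \<sigma>p]
      by (auto simp: permute_list_compose[symmetric])
    show "\<forall>a\<in>{is::'n list. length is = p}. permute_list \<sigma> (permute_list (inv \<sigma>) a) = a"
      using \<sigma>p permutes_inv[OF \<sigma>p] permutes_inv_o[OF \<sigma>p]
      by (auto simp: permute_list_compose[symmetric])
  qed auto
  have "tensor_transform p T M js = (\<Sum>is\<in>{is. length is = p}. T is * (\<Prod>l<p. M $ (is ! l) $ (js ! l)))"
    using L by (simp add: tensor_transform_def)
  also have "\<dots> = (\<Sum>is\<in>{is. length is = p}. T (permute_list \<sigma> is) * (\<Prod>l<p. M $ (permute_list \<sigma> is ! l) $ (js ! l)))"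
    by (rule sum.reindex_bij_betw[OF bijl, symmetric])
  also have "\<dots> = (\<Sum>is\<in>{is. length is = p}. T is * (\<Prod>l<p. M $ (is ! \<sigma> l) $ (js' ! \<sigma> l)))"
  proof (rule sum.cong[OF refl])
    fix ks :: "'n list" assume "ks \<in> {is. length is = p}"
    then have li: "length ks = p" by simp
    have "T (permute_list \<sigma> ks) = T ks"
    proof -
      have m: "mset (permute_list \<sigma> ks) = mset ks" using \<sigma>p li mset_permute_list[of \<sigma> ks] by simp
      have l: "length (permute_list \<sigma> ks) = p" using li by simp
      show ?thesis using S[unfolded sym_tensor_def] m l by blast
    qed
    moreover have "(\<Prod>l<p. M $ (permute_list \<sigma> ks ! l) $ (js ! l)) = (\<Prod>l<p. M $ (ks ! \<sigma> l) $ (js' ! \<sigma> l))"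
      using li L' \<sigma>p \<sigma>(2)[symmetric] by (intro prod.cong) (auto simp: permute_list_nth)
    ultimately show "T (permute_list \<sigma> ks) * (\<Prod>l<p. M $ (permute_list \<sigma> ks ! l) $ (js ! l)) = T ks * (\<Prod>l<p. M $ (ks ! \<sigma> l) $ (js' ! \<sigma> l))"
      by simp
  qed
  also have "\<dots> = (\<Sum>is\<in>{is. length is = p}. T is * (\<Prod>l<p. M $ (is ! l) $ (js' ! l)))"
    by (intro sum.cong refl arg_cong[where f="\<lambda>x. _ * x"]) (rule prod.reindex_bij_betw[OF permutes_imp_bij[OF \<sigma>p]])
  also have "\<dots> = tensor_transform p T M js'"
    using L' by (simp add: tensor_transform_def)
  finally show "tensor_transform p T M js = tensor_transform p T M js'" .
qed


lemma complete:
  fixes u :: "nat \<Rightarrow> real^'n::finite"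
  assumes nz: "\<And>i. i < CARD('n) \<Longrightarrow> u i \<noteq> 0"
    and orth: "\<And>i j. i < CARD('n) \<Longrightarrow> j < CARD('n) \<Longrightarrow> i \<noteq> j \<Longrightarrow> u i \<bullet> u j = 0"
  shows "y = (\<Sum>i<CARD('n). ((u i \<bullet> y) / (u i \<bullet> u i)) *\<^sub>R u i)"
proof -
  let ?n = "CARD('n)"
  let ?S = "u ` {..<?n}"
  have inj: "inj_on u {..<?n}"
  proof (rule inj_onI)
    fix i j assume "i \<in> {..<?n}" "j \<in> {..<?n}" "u i = u j"
    then show "i = j" using nz orth by (metis inner_eq_zero_iff lessThan_iff)
  qed
  have card: "card ?S = ?n" using inj by (simp add: card_image)
  have po: "pairwise orthogonal ?S"
    unfolding pairwise_def orthogonal_def using orth by auto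
  have z: "0 \<notin> ?S" using nz by auto
  have ind: "independent ?S" by (rule pairwise_orthogonal_independent[OF po z])
  have "(UNIV :: (real^'n) set) \<subseteq> span ?S"
    by (rule card_ge_dim_independent) (use ind card in auto)
  then have "y \<in> span ?S" by auto
  then obtain c where c: "y = (\<Sum>v\<in>?S. c v *\<^sub>R v)"
    using span_finite[of ?S] by auto
  have y: "y = (\<Sum>i<?n. c (u i) *\<^sub>R u i)"
    using c inj by (simp add: sum.reindex)
  have coef: "c (u j) = (u j \<bullet> y) / (u j \<bullet> u j)" if j: "j < ?n" for j
  proof -
    have "u j \<bullet> y = (\<Sum>i<?n. c (u i) * (u j \<bullet> u i))"
      by (subst y) (simp add: inner_sum_right)
    also have "\<dots> = (\<Sum>i<?n. if i = j then c (u j) * (u j \<bullet> u j) else 0)"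
      by (rule sum.cong) (use orth j in auto)
    also have "\<dots> = c (u j) * (u j \<bullet> u j)" using j by simp
    finally show ?thesis using nz[OF j] by simp
  qed
  show ?thesis by (subst y) (simp add: coef)
qed

lemma sym_diff: "sym_tensor p A \<Longrightarrow> sym_tensor p B \<Longrightarrow> sym_tensor p (A - B)"
  unfolding sym_tensor_def tensor_space_def by auto

lemma sym_add: "sym_tensor p A \<Longrightarrow> sym_tensor p B \<Longrightarrow> sym_tensor p (\<lambda>is. A is + B is)"
  unfolding sym_tensor_def tensor_space_def by auto

lemma ta_diff: "tensor_apply (A - B) s = (\<lambda>is. tensor_apply A s is - tensor_apply B s is)"
  by (simp add: tensor_apply_def fun_eq_iff right_diff_distrib sum_subtractf)

lemma ta_add: "tensor_apply (\<lambda>is. A is + B is) s = (\<lambda>is. tensor_apply A s is + tensor_apply B s is)"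
  by (simp add: tensor_apply_def fun_eq_iff distrib_left sum.distrib)

lemma ta_zero: "tensor_apply T 0 = (\<lambda>is. 0)"
  by (simp add: tensor_apply_def fun_eq_iff)

lemma tt_zero: "tensor_transform p (\<lambda>is. 0) M = (\<lambda>js. 0)"
  by (simp add: tensor_transform_def fun_eq_iff)

lemma step:
  fixes Ck Ck1 Cs :: "('n::finite) tensor" and W V :: "real^'n^'n" and s :: "real^'n"
  assumes q: "p = Suc q" and Sk: "sym_tensor p Ck" and Sk1: "sym_tensor p Ck1" and Ss: "sym_tensor p Cs"
    and WV: "W ** V = mat 1" and VW: "V ** W = mat 1" and s: "s \<noteq> 0"
    and cons: "tensor_apply Ck1 s = tensor_apply Cs s"
    and min: "\<And>D. sym_tensor p D \<Longrightarrow> tensor_apply D s = tensor_apply Cs s \<Longrightarrow>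
       frob p (tensor_transform p (Ck1 - Ck) W) \<le> frob p (tensor_transform p (D - Ck) W)"
  shows "tensor_transform p (Ck1 - Cs) W = tensor_transform p (tensor_transform p (Ck - Cs) W) (projm (V *v s))"
proof -
  define u where "u = V *v s"
  have Wu: "W *v u = s" unfolding u_def by (simp add: matrix_vector_mul_assoc WV)
  have u0: "u \<noteq> 0" using Wu s by auto
  define P where "P = projm u"
  define E where "E = Ck - Cs"
  define E' where "E' = Ck1 - Cs"
  define F where "F = tensor_transform p E W"
  define F' where "F' = tensor_transform p E' W"
  define b where "b = tensor_transform p F P"
  define M where "M = W ** P ** V"
  define X where "X = tensor_transform p E M"
  define D where "D = (\<lambda>is. Cs is + X is)"
  have SE: "sym_tensor p E" unfolding E_def by (rule sym_diff[OF Sk Ss])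
  have SE': "sym_tensor p E'" unfolding E'_def by (rule sym_diff[OF Sk1 Ss])
  have SD: "sym_tensor p D" unfolding D_def X_def by (rule sym_add[OF Ss sym_tt[OF SE]])
  have Ms: "M *v s = 0"
    unfolding M_def P_def by (simp add: matrix_vector_mul_assoc[symmetric] u_def[symmetric] projm_u[OF u0])
  have "tensor_apply X s = (\<lambda>is. 0)"
    unfolding X_def q ta_tt Ms ta_zero tt_zero ..
  then have consD: "tensor_apply D s = tensor_apply Cs s"
    unfolding D_def ta_add by simp
  have mn: "frob p (tensor_transform p (Ck1 - Ck) W) \<le> frob p (tensor_transform p (D - Ck) W)"
    by (rule min[OF SD consD])
  have MW: "M ** W = W ** P" unfolding M_def by (simp add: matrix_mul_assoc[symmetric] VW)
  have e1: "Ck1 - Ck = (\<lambda>is. E' is - E is)" unfolding E_def E'_def by (simp add: fun_eq_iff)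
  have e2: "D - Ck = (\<lambda>is. X is - E is)" unfolding E_def D_def by (simp add: fun_eq_iff)
  have t1: "tensor_transform p (Ck1 - Ck) W js = F' js - F js" for js
    unfolding e1 tt_diff F_def F'_def ..
  have t2: "tensor_transform p (D - Ck) W js = b js - F js" for js
    unfolding e2 tt_diff F_def b_def X_def tt_comp MW ..
  have le: "(\<Sum>js\<in>{js::'n list. length js = p}. (F' js - F js)\<^sup>2) \<le> (\<Sum>js\<in>{js. length js = p}. (b js - F js)\<^sup>2)"
    using mn unfolding frob_def t1 t2 by simp
  have taF': "tensor_apply F' u = (\<lambda>is. 0)"
    unfolding F'_def q ta_tt Wu
  proof -
    have "tensor_apply E' s = (\<lambda>is. 0)" unfolding E'_def ta_diff cons by simp
    then show "tensor_transform q (tensor_apply E' s) W = (\<lambda>is. 0)" by (simp add: tt_zero)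
  qed
  have ZF': "Zprop p F' u"
    by (rule sym_Zprop) (use sym_tt[OF SE'] taF' in \<open>auto simp: F'_def\<close>)
  have fixF': "tensor_transform p F' P js = F' js" if "length js = p" for js
    unfolding P_def by (rule proj_fix[OF ZF' that])
  define H where "H = (\<lambda>js. F' js - b js)"
  have fixH: "tensor_transform p H P js = H js" if "length js = p" for js
    unfolding H_def tt_diff fixF'[OF that] by (simp only: b_def tt_comp P_def projm_idem[OF u0])
  have cross: "ip p H (\<lambda>js. b js - F js) = 0"
  proof -
    have "ip p H (\<lambda>js. b js - F js) = ip p H b - ip p H F"
      by (simp add: ip_def right_diff_distrib sum_subtractf)
    also have "ip p H b = ip p (tensor_transform p H (transpose P)) F"
      unfolding b_def by (rule tt_adj)
    also have "\<dots> = ip p H F"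
      unfolding ip_def P_def projm_transpose by (rule sum.cong) (auto simp: fixH[unfolded P_def])
    finally show ?thesis by simp
  qed
  have "(\<Sum>js\<in>{js::'n list. length js = p}. (F' js - F js)\<^sup>2)
      = (\<Sum>js\<in>{js. length js = p}. (H js)\<^sup>2) + 2 * ip p H (\<lambda>js. b js - F js) + (\<Sum>js\<in>{js. length js = p}. (b js - F js)\<^sup>2)"
  proof -
    have pw: "\<And>js. (F' js - F js)\<^sup>2 = (H js)\<^sup>2 + 2 * (H js * (b js - F js)) + (b js - F js)\<^sup>2"
      by (simp add: H_def power2_eq_square algebra_simps)
    show ?thesis by (simp only: pw sum.distrib ip_def sum_distrib_left)
  qed
  with le cross have "(\<Sum>js\<in>{js::'n list. length js = p}. (H js)\<^sup>2) \<le> 0" by simp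
  then have "(\<Sum>js\<in>{js::'n list. length js = p}. (H js)\<^sup>2) = 0"
    by (meson order_antisym sum_nonneg zero_le_power2)
  then have H0: "H js = 0" if "length js = p" for js
    using that by (subst (asm) sum_nonneg_eq_0_iff[OF finite_len]) auto
  have "F' = b"
  proof
    fix js :: "'n list"
    show "F' js = b js"
    proof (cases "length js = p")
      case True then show ?thesis using H0[OF True] by (simp add: H_def)
    next
      case False then show ?thesis by (simp add: F'_def b_def tt_off)
    qed
  qed
  then show ?thesis unfolding F'_def b_def F_def E_def E'_def P_def u_def .
qed

theorem mainTheorem4:
  fixes p :: nat
    and f :: "real^'n \<Rightarrow> real"
    and x :: "nat \<Rightarrow> real^'n"
    and W :: "nat \<Rightarrow> real^'n^'n"
    and Wstar :: "real^'n^'n"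
    and C :: "nat \<Rightarrow> ('n::finite) tensor"
    and Cstar :: "'n tensor"
  assumes p: "p \<ge> 2"
    and f_Cp: "Cp p f"
    and steps: "\<And>k. x (Suc k) - x k \<noteq> 0"
    and W_inv: "\<And>k. invertible (W k)"
    and C0: "sym_tensor p (C 0)"
    and C_update: "\<And>k. sym_tensor p (C (Suc k))
        \<and> tensor_apply (C (Suc k)) (x (Suc k) - x k)
            = tensor_apply (Ctilde p f (x k) (x (Suc k) - x k)) (x (Suc k) - x k)
        \<and> (\<forall>D. sym_tensor p D
              \<and> tensor_apply D (x (Suc k) - x k)
                  = tensor_apply (Ctilde p f (x k) (x (Suc k) - x k)) (x (Suc k) - x k)
              \<longrightarrow> frob p (tensor_transform p (C (Suc k) - C k) (W k))
                  \<le> frob p (tensor_transform p (D - C k) (W k)))"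
    and Cstar: "sym_tensor p Cstar"
    and Dp_const: "\<And>y. Dp p f y = Cstar"
    and Wstar: "invertible Wstar"
    and W_const: "\<And>k. W k = Wstar"
    and orth: "\<And>i j. i < CARD('n) \<Longrightarrow> j < CARD('n) \<Longrightarrow> i \<noteq> j \<Longrightarrow>
        (matrix_inv Wstar *v (x (Suc i) - x i)) \<bullet> (matrix_inv Wstar *v (x (Suc j) - x j)) = 0"
  shows "C (CARD('n)) = Cstar"
proof -
  let ?n = "CARD('n)"
  define V where "V = matrix_inv Wstar"
  have WV: "Wstar ** V = mat 1" and VW: "V ** Wstar = mat 1"
    using Wstar unfolding invertible_def V_def matrix_inv_def by (metis (mono_tags, lifting) someI_ex)+
  obtain q where q: "p = Suc q" using p by (cases p) auto
  define s where "s k = x (Suc k) - x k" for k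
  define u where "u k = V *v s k" for k
  have u0: "u k \<noteq> 0" for k
  proof
    assume "u k = 0"
    then have "Wstar *v u k = 0" by simp
    then show False using steps[of k] by (simp add: u_def s_def matrix_vector_mul_assoc WV)
  qed
  have orthu: "u i \<bullet> u j = 0" if "i < ?n" "j < ?n" "i \<noteq> j" for i j
    using orth[OF that] by (simp add: u_def s_def V_def)
  have Ct: "Ctilde p f a b = Cstar" for a b
    by (simp add: Ctilde_def Dp_const)
  have SC: "sym_tensor p (C k)" for k
    by (cases k) (use C0 C_update in auto)
  define F where "F k = tensor_transform p (C k - Cstar) Wstar" for k
  define P where "P k = projm (u k)" for k
  have stepF: "F (Suc k) = tensor_transform p (F k) (P k)" for k
    unfolding F_def P_def u_def
  proof (rule step[OF q SC SC Cstar WV VW])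
    show "s k \<noteq> 0" using steps[of k] by (simp add: s_def)
    show "tensor_apply (C (Suc k)) (s k) = tensor_apply Cstar (s k)"
      using C_update[of k] by (simp add: Ct s_def)
    show "frob p (tensor_transform p (C (Suc k) - C k) Wstar) \<le> frob p (tensor_transform p (D - C k) Wstar)"
      if "sym_tensor p D" "tensor_apply D (s k) = tensor_apply Cstar (s k)" for D
      using C_update[of k] that by (simp add: Ct s_def W_const)
  qed
  define R where "R = rec_nat (mat 1) (\<lambda>k Rk. Rk ** P k)"
  have R0: "R 0 = mat 1" and RS: "R (Suc k) = R k ** P k" for k by (simp_all add: R_def)
  have FR: "F k = tensor_transform p (F 0) (R k)" for k
  proof (induction k)
    case 0 show ?case by (rule ext) (metis F_def R0 tt_comp matrix_mul_rid)
  next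
    case (Suc k) show ?case by (rule ext) (simp add: stepF Suc tt_comp RS)
  qed
  have Rvec: "k \<le> ?n \<Longrightarrow> R k *v y = y - (\<Sum>i<k. ((u i \<bullet> y) / (u i \<bullet> u i)) *\<^sub>R u i)" for k y
  proof (induction k arbitrary: y)
    case 0 then show ?case by (simp add: R0)
  next
    case (Suc k)
    have k: "k < ?n" using Suc.prems by simp
    have Ruk: "R k *v u k = u k"
    proof -
      have "(\<Sum>i<k. ((u i \<bullet> u k) / (u i \<bullet> u i)) *\<^sub>R u i) = 0"
        by (rule sum.neutral) (use orthu k in auto)
      then show ?thesis using Suc.IH k by simp
    qed
    have "R (Suc k) *v y = R k *v (y - ((u k \<bullet> y) / (u k \<bullet> u k)) *\<^sub>R u k)"
      by (simp add: RS P_def matrix_vector_mul_assoc[symmetric] projm_vec)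
    also have "\<dots> = R k *v y - ((u k \<bullet> y) / (u k \<bullet> u k)) *\<^sub>R u k"
      by (simp add: matrix_vector_mult_diff_distrib matrix_vector_mult_scaleR Ruk)
    finally show ?case using Suc.IH k by (simp add: algebra_simps)
  qed
  have Rn: "R ?n *v y = 0" for y
  proof -
    have "y = (\<Sum>i<?n. ((u i \<bullet> y) / (u i \<bullet> u i)) *\<^sub>R u i)"
      by (rule complete) (use u0 orthu in auto)
    then show ?thesis using Rvec[of ?n y] by simp
  qed
  have Rn0: "R ?n $ a $ b = 0" for a b
  proof -
    have "(R ?n *v axis b 1) $ a = R ?n $ a $ b"
      by (simp add: matrix_vector_mult_basis column_def)
    then show ?thesis using Rn by simp
  qed
  have Fn: "F ?n js = 0" for js
  proof (cases js)
    case Nil then show ?thesis using q by (simp add: FR[of ?n] tt_off)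
  next
    case (Cons j js') then show ?thesis using q by (simp add: FR[of ?n] tt_Cons Rn0)
  qed
  show ?thesis
  proof
    fix js :: "'n list"
    show "C ?n js = Cstar js"
    proof (cases "length js = p")
      case True
      have "C ?n js - Cstar js = tensor_transform p (C ?n - Cstar) (Wstar ** V) js"
        by (simp add: WV tt_id[OF True])
      also have "\<dots> = tensor_transform p (F ?n) V js" by (simp add: F_def tt_comp)
      also have "\<dots> = 0"
      proof -
        have "F ?n = (\<lambda>is. 0)" using Fn by (rule ext)
        then show ?thesis by (simp add: tt_zero)
      qed
      finally show ?thesis by simp
    next
      case False
      then show ?thesis using SC[of ?n] Cstar unfolding sym_tensor_def tensor_space_def by auto
    qed
  qed
qed

end
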